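(* Let $s\in\mathbb Z$ and let $\nu\neq\kappa$ be partitions with $|\nu|=|\kappa|=r$, with $\boldsymbol\beta(\nu)=(\alpha_1,\dots,\alpha_r)$ and $\boldsymbol\beta(\kappa)=(\beta_1,\dots,\beta_r)$. Put $\rho=\nu/(\nu\cap\kappa)$ and $\rho'=\kappa/(\nu\cap\kappa)$. 1) $\rho$ and $\rho'$ are both ribbons if and only if $\#(B(\nu)\cap B(\kappa))=r-2$. In this case $\rho$ and $\rho'$ have a common length $h$; let $y$ and $y'$ be the row indices of the tail and of the head of $\rho'$, and $x'$ and $x$ the row indices of the tail and of the head of $\rho$. Then $\{\alpha_i:i\neq x',y'\}=\{\beta_j:j\ne x,y\}$, $\mathrm{cont}(\mathrm{hd}\rho)=\beta_x=\alpha_{x'}-h$ and $\mathrm{cont}(\mathrm{hd}\rho')=\alpha_{y'}=\beta_y-h$. Moreover, the $r$-tuple obtained from $(\beta_1,\dots,\beta_r)$ by replacing $\beta_x$ with $\beta_x+h$ and $\beta_y$ with $\beta_y-h$ is a rearrangement of $B(\nu)$, and the permutation $\pi\in\mathfrak S_r$ arranging it in decreasing order satisfies $\ell(\pi)=\mathrm{ht}(\rho)+\mathrm{ht}(\rho')$. 2) Under the conditions of 1), exactly one of the following holds, with the stated equivalences: (i) $y\le y'<x'\le x$, which holds iff $\nu\lhd\kappa$; (ii) $x'\le x<y\le y'$, which holds iff $\kappa\lhd\nu$.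
   Context: A partition $\lambda=(\lambda_1\ge\lambda_2\ge\cdots\ge0)$ is identified with its Young diagram $\{(i,j):1\le j\le\lambda_i\}$. For a fixed integer $s$ and a partition $\lambda$ with $|\lambda|=r$, $\boldsymbol\beta(\lambda)=(\lambda_1+s,\lambda_2+s-1,\dots,\lambda_r+s-r+1)$ and $B(\lambda)$ is the set of its entries. The content of a node $(i,j)$ is $s+j-i$. A ribbon is a nonempty connected (via nodes sharing a side) skew diagram with no $2\times2$ square; its head (resp. tail) is its node with $j-i$ minimal (resp. maximal); its height $\mathrm{ht}$ is (row of head) $-$ (row of tail); its length is its number of nodes. $\lhd$ is strict dominance of partitions ($\lambda\unlhd\mu$ iff $|\lambda|=|\mu|$ and $\sum_{j\le k}\lambda_j\le\sum_{j\le k}\mu_j$ for all $k$). $\ell$ is the Coxeter length on $\mathfrak S_r$. *)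

theory Defs
  imports "HOL-Combinatorics.Permutations" "HOL-Library.Multiset"
begin

text \<open>Partitions are represented as non-increasing lists of positive naturals.
  Rows are indexed from 1; part lam i is the i-th part (0 beyond the length).\<close>

definition is_partition :: "nat list \<Rightarrow> bool" where
  "is_partition lam \<longleftrightarrow> sorted (rev lam) \<and> 0 \<notin> set lam"

definition part :: "nat list \<Rightarrow> nat \<Rightarrow> nat" where
  "part lam i = (if 1 \<le> i \<and> i \<le> length lam then lam ! (i - 1) else 0)"

definition psize :: "nat list \<Rightarrow> nat" where
  "psize lam = sum_list lam"

definition diagram :: "nat list \<Rightarrow> (nat \<times> nat) set" where
  "diagram lam = {(i, j). 1 \<le> i \<and> 1 \<le> j \<and> j \<le> part lam i}"

definition beta :: "int \<Rightarrow> nat list \<Rightarrow> nat \<Rightarrow> int" where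
  "beta s lam i = int (part lam i) + s - int i + 1"

definition Bset :: "int \<Rightarrow> nat \<Rightarrow> nat list \<Rightarrow> int set" where
  "Bset s r lam = beta s lam ` {1..r}"

definition content :: "int \<Rightarrow> nat \<times> nat \<Rightarrow> int" where
  "content s p = s + int (snd p) - int (fst p)"

definition is_skew_diagram :: "(nat \<times> nat) set \<Rightarrow> bool" where
  "is_skew_diagram S \<longleftrightarrow> (\<exists>lam mu. is_partition lam \<and> is_partition mu \<and>
      diagram mu \<subseteq> diagram lam \<and> S = diagram lam - diagram mu)"

definition node_adj :: "nat \<times> nat \<Rightarrow> nat \<times> nat \<Rightarrow> bool" where
  "node_adj p q \<longleftrightarrow>
     (fst p = fst q \<and> (snd p = snd q + 1 \<or> snd q = snd p + 1)) \<or>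
     (snd p = snd q \<and> (fst p = fst q + 1 \<or> fst q = fst p + 1))"

definition connected_nodes :: "(nat \<times> nat) set \<Rightarrow> bool" where
  "connected_nodes S \<longleftrightarrow>
     (\<forall>p\<in>S. \<forall>q\<in>S. (\<lambda>a b. a \<in> S \<and> b \<in> S \<and> node_adj a b)\<^sup>*\<^sup>* p q)"

definition has_2x2 :: "(nat \<times> nat) set \<Rightarrow> bool" where
  "has_2x2 S \<longleftrightarrow> (\<exists>i j. (i, j) \<in> S \<and> (i + 1, j) \<in> S \<and> (i, j + 1) \<in> S \<and> (i + 1, j + 1) \<in> S)"

definition is_ribbon :: "(nat \<times> nat) set \<Rightarrow> bool" where
  "is_ribbon S \<longleftrightarrow> S \<noteq> {} \<and> is_skew_diagram S \<and> connected_nodes S \<and> \<not> has_2x2 S"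

definition diag :: "nat \<times> nat \<Rightarrow> int" where
  "diag p = int (snd p) - int (fst p)"

definition head :: "(nat \<times> nat) set \<Rightarrow> nat \<times> nat" where
  "head S = (THE p. p \<in> S \<and> (\<forall>q\<in>S. diag p \<le> diag q))"

definition tail :: "(nat \<times> nat) set \<Rightarrow> nat \<times> nat" where
  "tail S = (THE p. p \<in> S \<and> (\<forall>q\<in>S. diag q \<le> diag p))"

definition ht :: "(nat \<times> nat) set \<Rightarrow> int" where
  "ht S = int (fst (head S)) - int (fst (tail S))"

definition coxeter_length :: "nat \<Rightarrow> (nat \<Rightarrow> nat) \<Rightarrow> nat" where
  "coxeter_length r \<pi> = card {(i, j). 1 \<le> i \<and> i < j \<and> j \<le> r \<and> \<pi> j < \<pi> i}"

definition dominated :: "nat list \<Rightarrow> nat list \<Rightarrow> bool" where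
  "dominated lam mu \<longleftrightarrow> psize lam = psize mu \<and>
     (\<forall>k. (\<Sum>j=1..k. part lam j) \<le> (\<Sum>j=1..k. part mu j))"

definition strictly_dominated :: "nat list \<Rightarrow> nat list \<Rightarrow> bool" where
  "strictly_dominated lam mu \<longleftrightarrow> dominated lam mu \<and> lam \<noteq> mu"

end

theory Submission
  imports Defs
begin

lemma part_mono:
  assumes "is_partition L" "1 \<le> i" "i \<le> j"
  shows "part L j \<le> part L i"
proof (cases "j \<le> length L")
  case True
  have s: "sorted (rev L)" using assms(1) by (simp add: is_partition_def)
  have "rev L ! (length L - j) \<le> rev L ! (length L - i)"
    using s True assms(2,3) by (intro sorted_nth_mono) auto
  then show ?thesis using True assms(2,3) by (simp add: part_def rev_nth Suc_diff_Suc)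
next
  case False then show ?thesis by (simp add: part_def)
qed

lemma part_pos:
  assumes "is_partition L"
  shows "0 < part L i \<longleftrightarrow> 1 \<le> i \<and> i \<le> length L"
proof -
  have "0 \<notin> set L" using assms by (simp add: is_partition_def)
  show ?thesis
  proof
    assume h: "0 < part L i"
    then show "1 \<le> i \<and> i \<le> length L" by (auto simp: part_def split: if_splits)
  next
    assume h: "1 \<le> i \<and> i \<le> length L"
    then have "L ! (i - 1) \<in> set L" by (intro nth_mem) auto
    then have "L ! (i - 1) \<noteq> 0" using \<open>0 \<notin> set L\<close> by metis
    then show "0 < part L i" using h by (simp add: part_def)
  qed
qed

lemma sum_list_part:
  assumes "length L \<le> N"
  shows "sum_list L = (\<Sum>i=1..N. part L i)"
proof -
  have "sum_list L = (\<Sum>i<length L. L ! i)" by (simp add: sum_list_sum_nth atLeast0LessThan)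
  also have "\<dots> = (\<Sum>i=1..length L. part L i)"
    by (rule sum.reindex_bij_witness[where i="\<lambda>i. i - 1" and j="\<lambda>i. i + 1"]) (auto simp: part_def)
  also have "\<dots> = (\<Sum>i=1..N. part L i)"
    by (rule sum.mono_neutral_left) (use assms in \<open>auto simp: part_def\<close>)
  finally show ?thesis .
qed

lemma length_le_sum:
  assumes "is_partition L" shows "length L \<le> sum_list L"
proof -
  have "\<forall>x\<in>set L. 1 \<le> x" using assms by (auto simp: is_partition_def Suc_le_eq intro: gr0I)
  then have "sum_list (map (\<lambda>_. 1::nat) L) \<le> sum_list (map id L)"
    by (intro sum_list_mono) auto
  then show ?thesis by (simp add: sum_list_triv)
qed

lemma part_eq_list:
  assumes "is_partition P" "is_partition Q" "\<And>i. 1 \<le> i \<Longrightarrow> part P i = part Q i"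
  shows "P = Q"
proof -
  have len: "length P = length Q"
  proof (rule ccontr)
    assume ne: "length P \<noteq> length Q"
    show False
    proof (cases "length P < length Q")
      case True
      then have "0 < part Q (length Q)" using part_pos[OF assms(2)] by simp
      moreover have "part P (length Q) = 0" using True by (simp add: part_def)
      ultimately show False using assms(3)[of "length Q"] True by simp
    next
      case False
      then have lt: "length Q < length P" using ne by simp
      then have "0 < part P (length P)" using part_pos[OF assms(1)] by simp
      moreover have "part Q (length P) = 0" using lt by (simp add: part_def)
      ultimately show False using assms(3)[of "length P"] lt by simp
    qed
  qed
  show ?thesis
  proof (rule nth_equalityI)
    show "length P = length Q" by (rule len)
    fix i assume "i < length P"
    then show "P ! i = Q ! i" using assms(3)[of "Suc i"] len by (simp add: part_def)
  qed
qed

lemma beta_strict: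
  assumes "is_partition L" "1 \<le> i" "i < j"
  shows "beta s L j < beta s L i"
  using part_mono[OF assms(1,2), of j] assms(3) by (simp add: beta_def)

lemma beta_le:
  assumes "is_partition L" "1 \<le> i" "i \<le> j"
  shows "beta s L j \<le> beta s L i"
  using part_mono[OF assms(1,2), of j] assms(3) by (simp add: beta_def)

lemma beta_inj:
  assumes "is_partition L" "1 \<le> i" "1 \<le> j" "beta s L i = beta s L j"
  shows "i = j"
  using beta_strict[OF assms(1,2), of j] beta_strict[OF assms(1,3), of i] assms(4)
  by (metis less_irrefl linorder_neqE_nat)

lemma beta_inj_on: "is_partition L \<Longrightarrow> inj_on (beta s L) {1..r}"
  by (auto intro!: inj_onI beta_inj)

lemma card_Bset: "is_partition L \<Longrightarrow> card (Bset s r L) = r"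
  unfolding Bset_def by (subst card_image[OF beta_inj_on]) auto


lemma is_partitionI:
  assumes "0 \<notin> set L" "\<And>i j. 1 \<le> i \<Longrightarrow> i \<le> j \<Longrightarrow> j \<le> length L \<Longrightarrow> part L j \<le> part L i"
  shows "is_partition L"
proof -
  have "sorted (rev L)"
  proof (rule sorted_iff_nth_mono[THEN iffD2], intro allI impI)
    fix i j assume ij: "i \<le> j" "j < length (rev L)"
    have jl: "j < length L" using ij by simp
    have "part L (length L - i) \<le> part L (length L - j)"
      by (rule assms(2)) (use ij jl in linarith)+
    moreover have "part L (length L - i) = L ! (length L - Suc i)" using ij jl
      by (simp add: part_def Suc_leI diff_diff_left)
    moreover have "part L (length L - j) = L ! (length L - Suc j)" using ij jl
      by (simp add: part_def Suc_leI diff_diff_left)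
    ultimately show "rev L ! i \<le> rev L ! j" using ij by (simp add: rev_nth)
  qed
  then show ?thesis using assms(1) by (simp add: is_partition_def)
qed

definition pmin :: "nat list \<Rightarrow> nat list \<Rightarrow> nat list" where
  "pmin P Q = map (\<lambda>k. min (part P (Suc k)) (part Q (Suc k))) [0..<min (length P) (length Q)]"

lemma length_pmin: "length (pmin P Q) = min (length P) (length Q)"
  by (simp add: pmin_def)

lemma part_pmin: "part (pmin P Q) i = min (part P i) (part Q i)"
proof (cases "1 \<le> i \<and> i \<le> min (length P) (length Q)")
  case True
  then have u: "[0..<min (length P) (length Q)] ! (i - 1) = i - 1" by (subst nth_upt) auto
  have "pmin P Q ! (i - 1) = (\<lambda>k. min (part P (Suc k)) (part Q (Suc k))) ([0..<min (length P) (length Q)] ! (i - 1))"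
    unfolding pmin_def by (rule nth_map) (use True in auto)
  also have "\<dots> = min (part P i) (part Q i)" unfolding u using True by simp
  finally have "pmin P Q ! (i - 1) = min (part P i) (part Q i)" .
  then show ?thesis using True by (simp add: part_def length_pmin)
next
  case False
  then have "part P i = 0 \<or> part Q i = 0" by (auto simp: part_def)
  then show ?thesis using False unfolding part_def[of "pmin P Q"] length_pmin by auto
qed

lemma pmin_partition:
  assumes "is_partition P" "is_partition Q"
  shows "is_partition (pmin P Q)"
proof (rule is_partitionI)
  show "0 \<notin> set (pmin P Q)"
  proof
    assume "0 \<in> set (pmin P Q)"
    then obtain k where k: "k < min (length P) (length Q)" "min (part P (Suc k)) (part Q (Suc k)) = 0"
      by (auto simp: pmin_def)
    then have i: "1 \<le> Suc k" "Suc k \<le> min (length P) (length Q)" "min (part P (Suc k)) (part Q (Suc k)) = 0"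
      by auto
    then show False using part_pos[OF assms(1), of "Suc k"] part_pos[OF assms(2), of "Suc k"] by auto
  qed
  fix i j :: nat assume "1 \<le> i" "i \<le> j" "j \<le> length (pmin P Q)"
  then show "part (pmin P Q) j \<le> part (pmin P Q) i"
    using part_mono[OF assms(1), of i j] part_mono[OF assms(2), of i j] by (auto simp: part_pmin min_def)
qed

lemma skewI:
  assumes "is_partition P" "is_partition Q"
  shows "is_skew_diagram (diagram P - diagram Q)"
  unfolding is_skew_diagram_def
  apply (rule exI[of _ P], rule exI[of _ "pmin P Q"])
  using assms pmin_partition by (auto simp: diagram_def part_pmin)

definition Rs :: "nat list \<Rightarrow> nat list \<Rightarrow> nat set" where
  "Rs P Q = {i. 1 \<le> i \<and> part Q i < part P i}"

definition ribc :: "nat list \<Rightarrow> nat list \<Rightarrow> nat \<Rightarrow> nat \<Rightarrow> bool" where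
  "ribc P Q t u \<longleftrightarrow> 1 \<le> t \<and> t \<le> u \<and> Rs P Q = {t..u} \<and>
     (\<forall>i. t \<le> i \<longrightarrow> i < u \<longrightarrow> part P (Suc i) = part Q i + 1)"

locale tp =
  fixes P Q :: "nat list" and r :: nat and s :: int
  assumes pP: "is_partition P" and pQ: "is_partition Q"
    and sP: "psize P = r" and sQ: "psize Q = r"
begin

lemma swap: "tp Q P r"
  using pP pQ sP sQ by unfold_locales

lemma lenP: "length P \<le> r" using length_le_sum[OF pP] sP by (simp add: psize_def)
lemma lenQ: "length Q \<le> r" using length_le_sum[OF pQ] sQ by (simp add: psize_def)

lemma partP0: "r < i \<Longrightarrow> part P i = 0" using lenP by (simp add: part_def)
lemma partQ0: "r < i \<Longrightarrow> part Q i = 0" using lenQ by (simp add: part_def)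

lemma sumP: "(\<Sum>i=1..r. part P i) = r" using sum_list_part[OF lenP] sP by (simp add: psize_def)
lemma sumQ: "(\<Sum>i=1..r. part Q i) = r" using sum_list_part[OF lenQ] sQ by (simp add: psize_def)

lemma Rs_sub: "Rs P Q \<subseteq> {1..r}"
proof
  fix i assume "i \<in> Rs P Q"
  then have "1 \<le> i" "0 < part P i" by (auto simp: Rs_def)
  then show "i \<in> {1..r}" using part_pos[OF pP, of i] lenP by auto
qed

lemma Rs_fin: "finite (Rs P Q)" using Rs_sub finite_subset by blast

lemma Rs_ne: assumes "P \<noteq> Q" shows "Rs P Q \<noteq> {}"
proof
  assume e: "Rs P Q = {}"
  then have le: "\<forall>i\<in>{1..r}. part P i \<le> part Q i" by (auto simp: Rs_def)
  show False
  proof (cases "\<exists>i\<in>{1..r}. part P i < part Q i")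
    case True
    then have "(\<Sum>i=1..r. part P i) < (\<Sum>i=1..r. part Q i)"
      using le by (intro sum_strict_mono_ex1) auto
    then show False using sumP sumQ by simp
  next
    case False
    have "P = Q"
    proof (rule part_eq_list[OF pP pQ])
      fix i :: nat assume "1 \<le> i"
      then show "part P i = part Q i"
        using False le partP0[of i] partQ0[of i] by (cases "i \<le> r") force+
    qed
    then show False using assms by simp
  qed
qed

lemma M1:
  assumes "i \<in> Rs P Q" "1 \<le> j" "beta s P i = beta s Q j"
  shows "j < i" "\<And>l. j \<le> l \<Longrightarrow> l \<le> i \<Longrightarrow> l \<in> Rs P Q"
proof -
  have i1: "1 \<le> i" and lt: "part Q i < part P i" using assms(1) by (auto simp: Rs_def)
  have "beta s Q i < beta s P i" using lt by (simp add: beta_def)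
  then show ji: "j < i" using assms(3) beta_le[OF pQ i1, of j s] by (metis leI order_less_irrefl order_le_less_trans)
  fix l assume l: "j \<le> l" "l \<le> i"
  have "part P i \<le> part P l" using part_mono[OF pP _ l(2)] assms(2) l(1) by simp
  moreover have "part Q l \<le> part Q j" using part_mono[OF pQ assms(2) l(1)] .
  moreover have "int (part Q j) < int (part P i)" using assms(3) ji by (simp add: beta_def)
  ultimately show "l \<in> Rs P Q" using assms(2) l by (simp add: Rs_def)
qed

lemma M2:
  assumes "i \<in> Rs Q P" "1 \<le> j" "beta s P i = beta s Q j"
  shows "i < j" "\<And>l. i \<le> l \<Longrightarrow> l \<le> j \<Longrightarrow> l \<in> Rs Q P"
proof -
  have i1: "1 \<le> i" and lt: "part P i < part Q i" using assms(1) by (auto simp: Rs_def)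
  have "beta s P i < beta s Q i" using lt by (simp add: beta_def)
  then show ji: "i < j" using assms(3) beta_le[OF pQ assms(2), of i s] by (metis leI order_less_irrefl order_le_less_trans)
  fix l assume l: "i \<le> l" "l \<le> j"
  have "part P l \<le> part P i" using part_mono[OF pP i1 l(1)] .
  moreover have "part Q j \<le> part Q l" using part_mono[OF pQ _ l(2)] i1 l(1) by simp
  moreover have "int (part P i) < int (part Q j)" using assms(3) ji by (simp add: beta_def)
  ultimately show "l \<in> Rs Q P" using i1 l by (simp add: Rs_def)
qed

lemma Bset_mem: "v \<in> Bset s r Q \<longleftrightarrow> (\<exists>j\<in>{1..r}. v = beta s Q j)"
  by (auto simp: Bset_def)

lemma unm1:
  assumes "P \<noteq> Q"
  shows "beta s P (Min (Rs P Q)) \<notin> Bset s r Q"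
proof
  let ?x = "Min (Rs P Q)"
  have xin: "?x \<in> Rs P Q" using Min_in[OF Rs_fin Rs_ne[OF assms]] .
  assume "beta s P ?x \<in> Bset s r Q"
  then obtain j where j: "j \<in> {1..r}" "beta s P ?x = beta s Q j" by (auto simp: Bset_mem)
  then have "j < ?x" "j \<in> Rs P Q" using M1[OF xin, of j] by auto
  then show False using Min_le[OF Rs_fin, of j] by simp
qed

lemma unm2:
  assumes "P \<noteq> Q"
  shows "beta s P (Max (Rs Q P)) \<notin> Bset s r Q"
proof
  let ?y = "Max (Rs Q P)"
  have fin: "finite (Rs Q P)" using tp.Rs_fin[OF swap] .
  have yin: "?y \<in> Rs Q P" using Max_in[OF fin tp.Rs_ne[OF swap]] assms by auto
  assume "beta s P ?y \<in> Bset s r Q"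
  then obtain j where j: "j \<in> {1..r}" "beta s P ?y = beta s Q j" by (auto simp: Bset_mem)
  then have "?y < j" "j \<in> Rs Q P" using M2[OF yin, of j] by auto
  then show False using Max_ge[OF fin, of j] by simp
qed


lemma Rs_disj: "i \<in> Rs P Q \<Longrightarrow> i \<notin> Rs Q P" by (auto simp: Rs_def)

lemma card_char:
  assumes "P \<noteq> Q"
  shows "card (Bset s r P \<inter> Bset s r Q) = r - 2 \<longleftrightarrow>
    (\<forall>i\<in>{1..r} - {Min (Rs P Q), Max (Rs Q P)}. beta s P i \<in> Bset s r Q)"
proof -
  let ?x = "Min (Rs P Q)" and ?y = "Max (Rs Q P)"
  let ?W = "{1..r} - {?x, ?y}"
  have xin: "?x \<in> Rs P Q" using Min_in[OF Rs_fin Rs_ne[OF assms]] .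
  have yin: "?y \<in> Rs Q P" using Max_in[OF tp.Rs_fin[OF swap] tp.Rs_ne[OF swap]] assms by auto
  have xr: "?x \<in> {1..r}" using xin Rs_sub by auto
  have yr: "?y \<in> {1..r}" using yin tp.Rs_sub[OF swap] by auto
  have xy: "?x \<noteq> ?y" using xin yin Rs_disj by auto
  have cW: "card ?W = r - 2" using xr yr xy by (simp add: card_Diff_subset)
  have cbW: "card (beta s P ` ?W) = r - 2"
    using cW by (subst card_image) (auto intro!: inj_on_subset[OF beta_inj_on[OF pP]])
  have sub: "Bset s r P \<inter> Bset s r Q \<subseteq> beta s P ` ?W"
  proof
    fix v assume v: "v \<in> Bset s r P \<inter> Bset s r Q"
    then obtain i where i: "i \<in> {1..r}" "v = beta s P i" by (auto simp: Bset_def)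
    have "i \<noteq> ?x" using unm1[OF assms] v i by auto
    moreover have "i \<noteq> ?y" using unm2[OF assms] v i by auto
    ultimately show "v \<in> beta s P ` ?W" using i by auto
  qed
  show ?thesis
  proof
    assume c: "card (Bset s r P \<inter> Bset s r Q) = r - 2"
    have "Bset s r P \<inter> Bset s r Q = beta s P ` ?W"
      by (rule card_subset_eq[OF _ sub]) (use c cbW in auto)
    then show "\<forall>i\<in>?W. beta s P i \<in> Bset s r Q" by auto
  next
    assume m: "\<forall>i\<in>?W. beta s P i \<in> Bset s r Q"
    have "beta s P ` ?W \<subseteq> Bset s r P \<inter> Bset s r Q" using m by (auto simp: Bset_def)
    then have "Bset s r P \<inter> Bset s r Q = beta s P ` ?W" using sub by auto
    then show "card (Bset s r P \<inter> Bset s r Q) = r - 2" using cbW by simp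
  qed
qed

lemma card_ribc:
  assumes "P \<noteq> Q" "card (Bset s r P \<inter> Bset s r Q) = r - 2"
  shows "ribc P Q (Min (Rs P Q)) (Max (Rs P Q))"
proof -
  obtain x where xd: "x = Min (Rs P Q)" by simp
  obtain u where ud: "u = Max (Rs P Q)" by simp
  obtain y where yd: "y = Max (Rs Q P)" by simp
  have m: "\<forall>i\<in>{1..r} - {x, y}. beta s P i \<in> Bset s r Q" using card_char assms xd yd by blast
  have ne: "Rs P Q \<noteq> {}" using Rs_ne[OF assms(1)] .
  have xin: "x \<in> Rs P Q" using Min_in[OF Rs_fin ne] xd by simp
  have uin: "u \<in> Rs P Q" using Max_in[OF Rs_fin ne] ud by simp
  have xmin: "x \<le> l" if "l \<in> Rs P Q" for l using Min_le[OF Rs_fin that] xd by simp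
  have umax: "l \<le> u" if "l \<in> Rs P Q" for l using Max_ge[OF Rs_fin that] ud by simp
  have step: "\<exists>j. j < i \<and> 1 \<le> j \<and> beta s P i = beta s Q j \<and> (\<forall>l. j \<le> l \<longrightarrow> l \<le> i \<longrightarrow> l \<in> Rs P Q)"
    if "i \<in> Rs P Q" "i \<noteq> x" for i
  proof -
    have "i \<in> {1..r}" using that Rs_sub by auto
    moreover have "y \<in> Rs Q P"
      using Max_in[OF tp.Rs_fin[OF swap] tp.Rs_ne[OF swap]] assms yd by auto
    then have "i \<noteq> y" using that Rs_disj by auto
    ultimately have "beta s P i \<in> Bset s r Q" using m that(2) by blast
    then obtain j where j: "j \<in> {1..r}" "beta s P i = beta s Q j" unfolding Bset_mem by blast
    have j1: "1 \<le> j" using j(1) by simp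
    have "j < i" using M1(1)[OF that(1) j1 j(2)] .
    moreover have "\<forall>l. j \<le> l \<longrightarrow> l \<le> i \<longrightarrow> l \<in> Rs P Q" using M1(2)[OF that(1) j1 j(2)] by blast
    ultimately show ?thesis using j(2) j1 by blast
  qed
  have int: "u - d \<in> Rs P Q" if "x \<le> u - d" for d
    using that
  proof (induction d)
    case 0 then show ?case using uin by simp
  next
    case (Suc d)
    have a: "u - d \<in> Rs P Q" using Suc by simp
    have "1 \<le> x" using xin by (simp add: Rs_def)
    then have "u - d \<noteq> x" using Suc.prems by linarith
    then obtain j where "j < u - d" "\<forall>l. j \<le> l \<longrightarrow> l \<le> u - d \<longrightarrow> l \<in> Rs P Q"
      using step[OF a] by blast
    then show ?case by simp
  qed
  have R: "Rs P Q = {x..u}"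
  proof
    show "Rs P Q \<subseteq> {x..u}" using xmin umax by auto
    show "{x..u} \<subseteq> Rs P Q"
    proof
      fix l assume "l \<in> {x..u}"
      then have "x \<le> u - (u - l)" "u - (u - l) = l" by auto
      then show "l \<in> Rs P Q" using int by metis
    qed
  qed
  have Rin: "l \<in> Rs P Q" if "x \<le> l" "l \<le> u" for l
    using that unfolding R by simp
  have adj: "beta s P (x + d + 1) = beta s Q (x + d)" if "x + d + 1 \<le> u" for d
    using that
  proof (induction d)
    case 0
    have "x + 1 \<in> Rs P Q" using Rin 0 by simp
    moreover have "x + 1 \<noteq> x" by simp
    ultimately obtain j where j: "j < x + 1" "1 \<le> j" "beta s P (x + 1) = beta s Q j"
       "\<forall>l. j \<le> l \<longrightarrow> l \<le> x + 1 \<longrightarrow> l \<in> Rs P Q"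
      using step[of "x + 1"] by blast
    have "j \<in> Rs P Q" using j(1,4) by simp
    then have "x \<le> j" using xmin by blast
    then have "j = x" using j(1) by simp
    then show ?case using j(3) by simp
  next
    case (Suc d)
    have IH: "beta s P (x + d + 1) = beta s Q (x + d)" using Suc.IH Suc.prems by linarith
    have "x + Suc d + 1 \<in> Rs P Q" using Rin Suc.prems by simp
    moreover have "x + Suc d + 1 \<noteq> x" by simp
    ultimately obtain j where j: "j < x + Suc d + 1" "1 \<le> j" "beta s P (x + Suc d + 1) = beta s Q j"
      using step[of "x + Suc d + 1"] by blast
    have x1: "1 \<le> x" using xin by (simp add: Rs_def)
    have "beta s P (x + Suc d + 1) < beta s P (x + d + 1)"
      using beta_strict[OF pP, of "x + d + 1" "x + Suc d + 1"] x1 by simp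
    then have "beta s Q j < beta s Q (x + d)" using IH j by simp
    have "x + d < j"
    proof (rule ccontr)
      assume "\<not> x + d < j"
      then have "j \<le> x + d" by simp
      from beta_le[OF pQ j(2) this, of s] show False using \<open>beta s Q j < beta s Q (x + d)\<close> by simp
    qed
    then have "j = x + Suc d" using j(1) by simp
    then show ?case using j by simp
  qed
  show ?thesis unfolding xd[symmetric] ud[symmetric] ribc_def
  proof (intro conjI allI impI)
    show "1 \<le> x" using xin by (simp add: Rs_def)
    show "x \<le> u" using xmin[OF uin] .
    show "Rs P Q = {x..u}" by (rule R)
    fix i assume i: "x \<le> i" "i < u"
    have "beta s P (x + (i - x) + 1) = beta s Q (x + (i - x))" using adj[of "i - x"] i by simp
    then have "beta s P (Suc i) = beta s Q i" using i by simp
    then show "part P (Suc i) = part Q i + 1" by (simp add: beta_def)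
  qed
qed

lemma ribc_Min: "ribc P Q t u \<Longrightarrow> Min (Rs P Q) = t"
  by (simp add: ribc_def, intro Min_eqI) auto
lemma ribc_Max: "ribc P Q t u \<Longrightarrow> Max (Rs P Q) = u"
  by (simp add: ribc_def, intro Max_eqI) auto
lemma ribc_ne: "ribc P Q t u \<Longrightarrow> P \<noteq> Q"
  by (auto simp: ribc_def Rs_def)

lemma ribc_match:
  assumes "ribc P Q t u" "ribc Q P t' u'"
  shows "\<forall>i\<in>{1..r} - {t, u'}. beta s P i \<in> Bset s r Q"
proof
  fix i assume i: "i \<in> {1..r} - {t, u'}"
  have A: "Rs P Q = {t..u}" "\<forall>i. t \<le> i \<longrightarrow> i < u \<longrightarrow> part P (Suc i) = part Q i + 1"
    using assms(1) by (auto simp: ribc_def)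
  have B: "Rs Q P = {t'..u'}" "\<forall>i. t' \<le> i \<longrightarrow> i < u' \<longrightarrow> part Q (Suc i) = part P i + 1"
    using assms(2) by (auto simp: ribc_def)
  have u'r: "u' \<le> r" using B(1) tp.Rs_sub[OF swap] assms(2) by (auto simp: ribc_def)
  consider (a) "i \<in> Rs P Q" | (b) "i \<in> Rs Q P" | (c) "i \<notin> Rs P Q" "i \<notin> Rs Q P" by blast
  then show "beta s P i \<in> Bset s r Q"
  proof cases
    case a
    then have "t < i" "i \<le> u" using A i by auto
    then have "beta s P i = beta s Q (i - 1)" using A(2)[rule_format, of "i - 1"]
      by (simp add: beta_def)
    moreover have "i - 1 \<in> {1..r}" using \<open>t < i\<close> i assms(1) by (auto simp: ribc_def)
    ultimately show ?thesis by (auto simp: Bset_def)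
  next
    case b
    then have "t' \<le> i" "i < u'" using B i by auto
    then have "beta s P i = beta s Q (i + 1)" using B(2)[rule_format, of i]
      by (simp add: beta_def)
    moreover have "i + 1 \<in> {1..r}" using \<open>i < u'\<close> u'r by auto
    ultimately show ?thesis by (auto simp: Bset_def)
  next
    case c
    then have "part P i = part Q i" using i by (auto simp: Rs_def)
    then have "beta s P i = beta s Q i" by (simp add: beta_def)
    then show ?thesis using i by (auto simp: Bset_def)
  qed
qed

lemma ribc_card:
  assumes "ribc P Q t u" "ribc Q P t' u'"
  shows "card (Bset s r P \<inter> Bset s r Q) = r - 2"
proof -
  have ne: "P \<noteq> Q" using ribc_ne[OF assms(1)] .
  show ?thesis using card_char[OF ne] ribc_match[OF assms] ribc_Min[OF assms(1)]
    tp.ribc_Max[OF swap assms(2)] by simp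
qed

lemma ribc_image:
  assumes "ribc P Q t u" "ribc Q P t' u'"
  shows "beta s P ` ({1..r} - {t, u'}) = Bset s r P \<inter> Bset s r Q"
proof
  show "beta s P ` ({1..r} - {t, u'}) \<subseteq> Bset s r P \<inter> Bset s r Q"
    using ribc_match[OF assms] by (auto simp: Bset_def)
  have ne: "P \<noteq> Q" using ribc_ne[OF assms(1)] .
  show "Bset s r P \<inter> Bset s r Q \<subseteq> beta s P ` ({1..r} - {t, u'})"
  proof
    fix v assume v: "v \<in> Bset s r P \<inter> Bset s r Q"
    then obtain i where i: "i \<in> {1..r}" "v = beta s P i" by (auto simp: Bset_def)
    have "i \<noteq> t" using unm1[OF ne] v i ribc_Min[OF assms(1)] by auto
    moreover have "i \<noteq> u'" using unm2[OF ne] v i tp.ribc_Max[OF swap assms(2)] by auto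
    ultimately show "v \<in> beta s P ` ({1..r} - {t, u'})" using i by auto
  qed
qed


lemma memS: "(i, j) \<in> diagram P - diagram Q \<longleftrightarrow> 1 \<le> i \<and> part Q i < j \<and> j \<le> part P i"
  by (auto simp: diagram_def)

lemma rowS: "(i, j) \<in> diagram P - diagram Q \<Longrightarrow> i \<in> Rs P Q"
  by (auto simp: diagram_def Rs_def)

lemma ribbon_ribc:
  assumes rib: "is_ribbon (diagram P - diagram Q)"
  shows "ribc P Q (Min (Rs P Q)) (Max (Rs P Q))"
proof -
  let ?S = "diagram P - diagram Q"
  let ?Rel = "\<lambda>a b. a \<in> ?S \<and> b \<in> ?S \<and> node_adj a b"
  obtain x where xd: "x = Min (Rs P Q)" by simp
  obtain u where ud: "u = Max (Rs P Q)" by simp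
  have ne: "Rs P Q \<noteq> {}" using rib rowS unfolding is_ribbon_def by fast
  have xin: "x \<in> Rs P Q" using Min_in[OF Rs_fin ne] xd by simp
  have uin: "u \<in> Rs P Q" using Max_in[OF Rs_fin ne] ud by simp
  have xmin: "x \<le> l" if "l \<in> Rs P Q" for l using Min_le[OF Rs_fin that] xd by simp
  have umax: "l \<le> u" if "l \<in> Rs P Q" for l using Max_ge[OF Rs_fin that] ud by simp
  have conn: "\<forall>p\<in>?S. \<forall>q\<in>?S. ?Rel\<^sup>*\<^sup>* p q" using rib by (simp add: is_ribbon_def connected_nodes_def)
  have no22: "\<not> has_2x2 ?S" using rib by (simp add: is_ribbon_def)
  have endS: "(i, part P i) \<in> ?S" if "i \<in> Rs P Q" for i using that by (auto simp: diagram_def Rs_def)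
  have lt_inv: "fst q < l" if "?Rel\<^sup>*\<^sup>* p q" "fst p < l" "\<forall>j. (l, j) \<notin> ?S" for p q l
  proof -
    from that(1) show ?thesis
    proof (induction rule: rtranclp_induct)
      case base show ?case using that(2) by simp
    next
      case (step b c)
      have "fst c \<le> fst b + 1" using step.hyps(2) by (auto simp: node_adj_def)
      moreover have "fst c \<noteq> l" using step.hyps(2) that(3) by (metis prod.collapse)
      ultimately show ?case using step.IH by linarith
    qed
  qed
  have R: "Rs P Q = {x..u}"
  proof
    show "Rs P Q \<subseteq> {x..u}" using xmin umax by auto
    show "{x..u} \<subseteq> Rs P Q"
    proof
      fix l assume l: "l \<in> {x..u}"
      show "l \<in> Rs P Q"
      proof (rule ccontr)
        assume nl: "l \<notin> Rs P Q"
        then have "l \<noteq> x" "l \<noteq> u" using xin uin by auto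
        then have lt: "x < l" "l < u" using l by auto
        have none: "\<forall>j. (l, j) \<notin> ?S" using nl rowS by blast
        have "?Rel\<^sup>*\<^sup>* (x, part P x) (u, part P u)" using conn endS[OF xin] endS[OF uin] by blast
        then have "fst (u, part P u) < l" using lt_inv[OF _ _ none] lt by fastforce
        then show False using lt by simp
      qed
    qed
  qed
  have adj: "part P (Suc i) = part Q i + 1" if i: "x \<le> i" "i < u" for i
  proof -
    have iR: "i \<in> Rs P Q" and i1R: "Suc i \<in> Rs P Q" using R i by auto
    have i1: "1 \<le> i" using iR by (simp add: Rs_def)
    show ?thesis
    proof (rule ccontr)
      assume ne: "part P (Suc i) \<noteq> part Q i + 1"
      show False
      proof (cases "part P (Suc i) \<le> part Q i")
        case True
        have le_inv: "fst q \<le> i" if "?Rel\<^sup>*\<^sup>* p q" "fst p \<le> i" for p q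
        proof -
          from that(1) show ?thesis
          proof (induction rule: rtranclp_induct)
            case base show ?case using that(2) by simp
          next
            case (step b c)
            obtain b1 b2 c1 c2 where bc: "b = (b1, b2)" "c = (c1, c2)" by fastforce
            have bS: "(b1, b2) \<in> ?S" and cS: "(c1, c2) \<in> ?S" and ad: "node_adj (b1, b2) (c1, c2)"
              using step.hyps(2) bc by auto
            have b1: "b1 \<le> i" using step.IH bc by simp
            show ?case
            proof (rule ccontr)
              assume "\<not> fst c \<le> i"
              then have "c1 = Suc i" "b1 = i" "b2 = c2" using ad b1 bc by (auto simp: node_adj_def)
              then show False using bS cS True by (auto simp: diagram_def)
            qed
          qed
        qed
        have "?Rel\<^sup>*\<^sup>* (i, part P i) (Suc i, part P (Suc i))" using conn endS[OF iR] endS[OF i1R] by blast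
        then have "fst (Suc i, part P (Suc i)) \<le> i" using le_inv by fastforce
        then show False by simp
      next
        case False
        then have big: "part Q i + 2 \<le> part P (Suc i)" using ne by simp
        have mono: "part P (Suc i) \<le> part P i" using part_mono[OF pP i1] by simp
        have monoQ: "part Q (Suc i) \<le> part Q i" using part_mono[OF pQ i1] by simp
        have "has_2x2 ?S" unfolding has_2x2_def
          apply (rule exI[of _ i], rule exI[of _ "part Q i + 1"])
          using big mono monoQ i1 by (auto simp: diagram_def)
        then show False using no22 by simp
      qed
    qed
  qed
  show ?thesis unfolding xd[symmetric] ud[symmetric] ribc_def
    using xin xmin[OF uin] R adj by (simp add: Rs_def)
qed


lemma ribc_ribbon:
  assumes rc: "ribc P Q t u"
  shows "is_ribbon (diagram P - diagram Q)"
proof -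
  let ?S = "diagram P - diagram Q"
  let ?Rel = "\<lambda>a b. a \<in> ?S \<and> b \<in> ?S \<and> node_adj a b"
  have t1: "1 \<le> t" and tu: "t \<le> u" and R: "Rs P Q = {t..u}"
    and adj: "\<And>i. t \<le> i \<Longrightarrow> i < u \<Longrightarrow> part P (Suc i) = part Q i + 1"
    using rc by (auto simp: ribc_def)
  have Rin: "i \<in> Rs P Q \<longleftrightarrow> t \<le> i \<and> i \<le> u" for i unfolding R by simp
  have endS: "(i, part P i) \<in> ?S" if "t \<le> i" "i \<le> u" for i
    using Rin[of i] that by (auto simp: diagram_def Rs_def)
  have ne: "?S \<noteq> {}" using endS[OF order.refl tu] by blast
  have no22: "\<not> has_2x2 ?S"
  proof
    assume "has_2x2 ?S"
    then obtain i j where ij: "(i, j) \<in> ?S" "(i + 1, j + 1) \<in> ?S" "(i + 1, j) \<in> ?S"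
      unfolding has_2x2_def by blast
    have "i \<in> Rs P Q" "Suc i \<in> Rs P Q" using rowS ij by auto
    then have "t \<le> i" "i < u" using Rin by auto
    then have "part P (Suc i) = part Q i + 1" using adj by blast
    then show False using ij(1,2) by (auto simp: diagram_def)
  qed
  have symR: "?Rel\<^sup>*\<^sup>* q p" if "?Rel\<^sup>*\<^sup>* p q" for p q
  proof -
    have eq: "?Rel\<inverse>\<inverse> = ?Rel" by (intro ext) (auto simp: node_adj_def)
    show ?thesis using rtranclp_converseI[OF that] unfolding eq .
  qed
  have H: "?Rel\<^sup>*\<^sup>* (i, j) (i, part P i)" if "(i, j) \<in> ?S" for i j
  proof -
    have "\<forall>j. part P i - j = d \<longrightarrow> (i, j) \<in> ?S \<longrightarrow> ?Rel\<^sup>*\<^sup>* (i, j) (i, part P i)" for d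
    proof (induction d)
      case 0
      then show ?case by (auto simp: diagram_def)
    next
      case (Suc d)
      show ?case
      proof (intro allI impI)
        fix j assume j: "part P i - j = Suc d" "(i, j) \<in> ?S"
        have j2: "(i, Suc j) \<in> ?S" using j by (auto simp: diagram_def)
        have "?Rel (i, j) (i, Suc j)" using j(2) j2 by (simp add: node_adj_def)
        moreover have "?Rel\<^sup>*\<^sup>* (i, Suc j) (i, part P i)" using Suc.IH j j2 by simp
        ultimately show "?Rel\<^sup>*\<^sup>* (i, j) (i, part P i)" by (rule converse_rtranclp_into_rtranclp)
      qed
    qed
    then show ?thesis using that by blast
  qed
  have link: "?Rel\<^sup>*\<^sup>* (Suc i, part P (Suc i)) (i, part P i)" if "t \<le> i" "i < u" for i
  proof -
    have a: "part P (Suc i) = part Q i + 1" using adj that by blast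
    have i1: "1 \<le> i" using that t1 by simp
    have mq: "part Q (Suc i) \<le> part Q i" using part_mono[OF pQ i1] by simp
    have iR: "i \<in> Rs P Q" using Rin that by simp
    have s1: "(Suc i, part Q i + 1) \<in> ?S" using a mq i1 by (auto simp: diagram_def)
    have s2: "(i, part Q i + 1) \<in> ?S" using iR by (auto simp: diagram_def Rs_def)
    have "?Rel (Suc i, part Q i + 1) (i, part Q i + 1)" using s1 s2 by (simp add: node_adj_def)
    moreover have "?Rel\<^sup>*\<^sup>* (i, part Q i + 1) (i, part P i)" using H[OF s2] .
    ultimately show ?thesis unfolding a by (rule converse_rtranclp_into_rtranclp)
  qed
  have G: "?Rel\<^sup>*\<^sup>* (t + d, part P (t + d)) (t, part P t)" if "t + d \<le> u" for d
    using that
  proof (induction d)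
    case 0 then show ?case by simp
  next
    case (Suc d)
    have "?Rel\<^sup>*\<^sup>* (Suc (t + d), part P (Suc (t + d))) (t + d, part P (t + d))"
      using link[of "t + d"] Suc.prems by simp
    moreover have "?Rel\<^sup>*\<^sup>* (t + d, part P (t + d)) (t, part P t)" using Suc by simp
    ultimately show ?case by simp
  qed
  have toO: "?Rel\<^sup>*\<^sup>* p (t, part P t)" if "p \<in> ?S" for p
  proof -
    obtain i j where p: "p = (i, j)" by fastforce
    have "i \<in> Rs P Q" using rowS that p by simp
    then have ti: "t \<le> i" "i \<le> u" using Rin by auto
    have "?Rel\<^sup>*\<^sup>* (i, j) (i, part P i)" using H that p by simp
    moreover have "?Rel\<^sup>*\<^sup>* (i, part P i) (t, part P t)" using G[of "i - t"] ti by simp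
    ultimately show ?thesis using p by simp
  qed
  have conn: "connected_nodes ?S"
    unfolding connected_nodes_def
  proof (intro ballI)
    fix p q assume "p \<in> ?S" "q \<in> ?S"
    then show "?Rel\<^sup>*\<^sup>* p q" using toO[of p] symR[OF toO[of q]] by simp
  qed
  show ?thesis unfolding is_ribbon_def using ne skewI[OF pP pQ] conn no22 by blast
qed


lemma card_S: "card (diagram P - diagram Q) = (\<Sum>i=1..r. part P i - part Q i)"
proof -
  have eq: "diagram P - diagram Q = Sigma {1..r} (\<lambda>i. {part Q i + 1..part P i})"
  proof (intro set_eqI iffI)
    fix p assume p: "p \<in> diagram P - diagram Q"
    obtain i j where ij: "p = (i, j)" by fastforce
    have "i \<in> Rs P Q" using rowS p ij by simp
    then have "i \<in> {1..r}" using Rs_sub by auto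
    then show "p \<in> Sigma {1..r} (\<lambda>i. {part Q i + 1..part P i})" using p ij by (auto simp: diagram_def)
  next
    fix p assume "p \<in> Sigma {1..r} (\<lambda>i. {part Q i + 1..part P i})"
    then show "p \<in> diagram P - diagram Q" by (auto simp: diagram_def)
  qed
  show ?thesis unfolding eq by (subst card_SigmaI) auto
qed

lemma card_S_int:
  assumes rc: "ribc P Q t u"
  shows "int (card (diagram P - diagram Q)) = beta s P t - beta s Q u"
proof -
  have t1: "1 \<le> t" and tu: "t \<le> u" and R: "Rs P Q = {t..u}"
    and adj: "\<And>i. t \<le> i \<Longrightarrow> i < u \<Longrightarrow> part P (Suc i) = part Q i + 1"
    using rc by (auto simp: ribc_def)
  have ur: "u \<le> r" using R Rs_sub tu by auto
  have "int (card (diagram P - diagram Q)) = (\<Sum>i=1..r. int (part P i - part Q i))"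
    unfolding card_S by (simp add: of_nat_sum)
  also have "\<dots> = (\<Sum>i=t..u. int (part P i - part Q i))"
  proof (rule sum.mono_neutral_right)
    show "finite {1..r}" by simp
    show "{t..u} \<subseteq> {1..r}" using t1 ur by auto
    show "\<forall>i\<in>{1..r} - {t..u}. int (part P i - part Q i) = 0"
    proof
      fix i assume "i \<in> {1..r} - {t..u}"
      then have "i \<notin> Rs P Q" "1 \<le> i" unfolding R by auto
      then show "int (part P i - part Q i) = 0" by (simp add: Rs_def)
    qed
  qed
  also have "\<dots> = (\<Sum>i=t..u. int (part P i) - int (part Q i))"
  proof (rule sum.cong[OF refl])
    fix i assume "i \<in> {t..u}"
    then have "i \<in> Rs P Q" unfolding R .
    then show "int (part P i - part Q i) = int (part P i) - int (part Q i)" by (simp add: Rs_def)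
  qed
  also have "\<dots> = int (part P t) - int (part Q u) + (int u - int t)"
  proof -
    have "(\<Sum>i=t..t+d. int (part P i) - int (part Q i)) = int (part P t) - int (part Q (t+d)) + int d"
      if "t + d \<le> u" for d
      using that
    proof (induction d)
      case 0 then show ?case by simp
    next
      case (Suc d)
      have "(\<Sum>i=t..t+Suc d. int (part P i) - int (part Q i)) =
          (\<Sum>i=t..t+d. int (part P i) - int (part Q i)) + (int (part P (Suc (t+d))) - int (part Q (Suc (t+d))))"
        by simp
      also have "\<dots> = int (part P t) - int (part Q (t+d)) + int d + (int (part P (Suc (t+d))) - int (part Q (Suc (t+d))))"
        using Suc by simp
      also have "part P (Suc (t+d)) = part Q (t+d) + 1" using adj[of "t+d"] Suc.prems by simp
      finally show ?case by simp
    qed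
    from this[of "u - t"] show ?thesis using tu by (simp add: of_nat_diff)
  qed
  also have "\<dots> = beta s P t - beta s Q u" by (simp add: beta_def)
  finally show ?thesis .
qed

lemma head_S:
  assumes rc: "ribc P Q t u"
  shows "head (diagram P - diagram Q) = (u, part Q u + 1)"
proof -
  let ?S = "diagram P - diagram Q"
  have t1: "1 \<le> t" and tu: "t \<le> u" and R: "Rs P Q = {t..u}"
    using rc by (auto simp: ribc_def)
  have key: "diag (u, part Q u + 1) \<le> diag p \<and> (diag p = diag (u, part Q u + 1) \<longrightarrow> p = (u, part Q u + 1))"
    if "p \<in> ?S" for p
  proof -
    obtain i j where p: "p = (i, j)" by fastforce
    have "i \<in> Rs P Q" using rowS that p by simp
    then have i: "t \<le> i" "i \<le> u" unfolding R by auto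
    have j: "part Q i < j" using that p by (auto simp: diagram_def)
    have m: "int (part Q u) - int u \<le> int (part Q i) - int i \<and> (i < u \<longrightarrow> int (part Q u) - int u < int (part Q i) - int i)"
      using beta_le[OF pQ _ i(2), of 0] beta_strict[OF pQ, of i u 0] i t1 by (auto simp: beta_def)
    show ?thesis using m j i p by (auto simp: diag_def)
  qed
  have uS: "(u, part Q u + 1) \<in> ?S"
  proof -
    have "u \<in> Rs P Q" unfolding R using tu by simp
    then show ?thesis by (auto simp: diagram_def Rs_def)
  qed
  show ?thesis unfolding head_def
  proof (rule the_equality)
    show "(u, part Q u + 1) \<in> ?S \<and> (\<forall>q\<in>?S. diag (u, part Q u + 1) \<le> diag q)" using uS key by blast
    fix p assume "p \<in> ?S \<and> (\<forall>q\<in>?S. diag p \<le> diag q)"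
    then show "p = (u, part Q u + 1)" using key[of p] uS by force
  qed
qed

lemma tail_S:
  assumes rc: "ribc P Q t u"
  shows "tail (diagram P - diagram Q) = (t, part P t)"
proof -
  let ?S = "diagram P - diagram Q"
  have t1: "1 \<le> t" and tu: "t \<le> u" and R: "Rs P Q = {t..u}"
    using rc by (auto simp: ribc_def)
  have key: "diag p \<le> diag (t, part P t) \<and> (diag p = diag (t, part P t) \<longrightarrow> p = (t, part P t))"
    if "p \<in> ?S" for p
  proof -
    obtain i j where p: "p = (i, j)" by fastforce
    have "i \<in> Rs P Q" using rowS that p by simp
    then have i: "t \<le> i" "i \<le> u" unfolding R by auto
    have j: "j \<le> part P i" using that p by (auto simp: diagram_def)
    have m: "int (part P i) - int i \<le> int (part P t) - int t \<and> (t < i \<longrightarrow> int (part P i) - int i < int (part P t) - int t)"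
      using beta_le[OF pP t1 i(1), of 0] beta_strict[OF pP t1, of i 0] by (auto simp: beta_def)
    show ?thesis using m j i p by (auto simp: diag_def)
  qed
  have tS: "(t, part P t) \<in> ?S"
  proof -
    have "t \<in> Rs P Q" unfolding R using tu by simp
    then show ?thesis by (auto simp: diagram_def Rs_def)
  qed
  show ?thesis unfolding tail_def
  proof (rule the_equality)
    show "(t, part P t) \<in> ?S \<and> (\<forall>q\<in>?S. diag q \<le> diag (t, part P t))" using tS key by blast
    fix p assume "p \<in> ?S \<and> (\<forall>q\<in>?S. diag q \<le> diag p)"
    then show "p = (t, part P t)" using key[of p] tS by force
  qed
qed


lemma dom_lemma:
  assumes a1: "\<And>i. 1 \<le> i \<Longrightarrow> part Q i < part P i \<Longrightarrow> i < c"
    and a2: "\<And>i. 1 \<le> i \<Longrightarrow> part P i < part Q i \<Longrightarrow> c \<le> i"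
  shows "dominated Q P"
  unfolding dominated_def
proof (intro conjI allI)
  show "psize Q = psize P" using sP sQ by simp
  fix k
  show "(\<Sum>j=1..k. part Q j) \<le> (\<Sum>j=1..k. part P j)"
  proof (cases "k < c")
    case True
    show ?thesis
    proof (rule sum_mono)
      fix j assume "j \<in> {1..k}"
      then show "part Q j \<le> part P j" using a2[of j] True by force
    qed
  next
    case False
    let ?N = "max k r"
    have "sum_list P = (\<Sum>j=1..?N. part P j)" using lenP by (intro sum_list_part) simp
    then have sP': "(\<Sum>j=1..?N. part P j) = r" using sP by (simp add: psize_def)
    have "sum_list Q = (\<Sum>j=1..?N. part Q j)" using lenQ by (intro sum_list_part) simp
    then have sQ': "(\<Sum>j=1..?N. part Q j) = r" using sQ by (simp add: psize_def)
    have split: "(\<Sum>j=1..?N. f j) = (\<Sum>j=1..k. f j) + (\<Sum>j=Suc k..?N. f j)" for f :: "nat \<Rightarrow> nat"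
    proof -
      have "{1..?N} = {1..k} \<union> {Suc k..?N}" by auto
      then show ?thesis by (simp add: sum.union_disjoint ivl_disj_int)
    qed
    have "(\<Sum>j=Suc k..?N. part P j) \<le> (\<Sum>j=Suc k..?N. part Q j)"
    proof (rule sum_mono)
      fix j assume "j \<in> {Suc k..?N}"
      then show "part P j \<le> part Q j" using a1[of j] False by force
    qed
    then show ?thesis using sP' sQ' split[of "part P"] split[of "part Q"] by linarith
  qed
qed

lemma dom_antisym:
  assumes "dominated P Q" "dominated Q P"
  shows "P = Q"
proof (rule part_eq_list[OF pP pQ])
  have eq: "(\<Sum>j=1..k. part P j) = (\<Sum>j=1..k. part Q j)" for k
    using assms by (auto simp: dominated_def intro: antisym)
  fix i :: nat assume i: "1 \<le> i"
  then obtain m where m: "i = Suc m" by (cases i) auto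
  have "(\<Sum>j=1..Suc m. part P j) = (\<Sum>j=1..m. part P j) + part P (Suc m)"
    by (simp add: sum.cl_ivl_Suc)
  moreover have "(\<Sum>j=1..Suc m. part Q j) = (\<Sum>j=1..m. part Q j) + part Q (Suc m)"
    by (simp add: sum.cl_ivl_Suc)
  ultimately show "part P i = part Q i" using eq[of m] eq[of "Suc m"] m by simp
qed


lemma r2: assumes "P \<noteq> Q" shows "2 \<le> r"
proof -
  let ?x = "Min (Rs P Q)" and ?y = "Max (Rs Q P)"
  have xin: "?x \<in> Rs P Q" using Min_in[OF Rs_fin Rs_ne[OF assms]] .
  have yin: "?y \<in> Rs Q P" using Max_in[OF tp.Rs_fin[OF swap] tp.Rs_ne[OF swap]] assms by auto
  have "{?x, ?y} \<subseteq> {1..r}" using xin yin Rs_sub tp.Rs_sub[OF swap] by auto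
  moreover have "?x \<noteq> ?y" using xin yin Rs_disj by auto
  ultimately have "card {?x, ?y} \<le> card {1..r}" by (intro card_mono) auto
  then show ?thesis using \<open>?x \<noteq> ?y\<close> by simp
qed

lemma card_sym: "card (diagram P - diagram Q) = card (diagram Q - diagram P)"
proof -
  have a: "int (card (diagram P - diagram Q)) = (\<Sum>i=1..r. int (part P i - part Q i))"
    unfolding card_S by (simp add: of_nat_sum)
  have b: "int (card (diagram Q - diagram P)) = (\<Sum>i=1..r. int (part Q i - part P i))"
    unfolding tp.card_S[OF swap] by (simp add: of_nat_sum)
  have "(\<Sum>i=1..r. int (part P i - part Q i)) - (\<Sum>i=1..r. int (part Q i - part P i))
      = (\<Sum>i=1..r. int (part P i)) - (\<Sum>i=1..r. int (part Q i))"
    by (simp add: sum_subtractf[symmetric] of_nat_diff) (rule sum.cong, auto simp: of_nat_diff)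
  also have "\<dots> = 0" using sumP sumQ by (simp add: of_nat_sum[symmetric])
  finally show ?thesis using a b by linarith
qed

end

lemma cox_sub:
  fixes x x' y y' i j :: nat
  assumes "1 \<le> x'" "x' \<le> x" "y \<le> y'" "1 \<le> y" "x < y \<or> y' < x'"
   "i < j" "(if j = x' then x else if x' < j \<and> j \<le> x then j - 1
            else if j = y' then y else if y \<le> j \<and> j < y' then j + 1 else j) <
    (if i = x' then x else if x' < i \<and> i \<le> x then i - 1
            else if i = y' then y else if y \<le> i \<and> i < y' then i + 1 else i)"
  shows "(i = x' \<and> x' < j \<and> j \<le> x) \<or> (y \<le> i \<and> i < y' \<and> j = y')"
  using assms by (simp split: if_split_asm; linarith)


lemma cox_count:
  fixes x x' y y' r :: nat
  assumes "1 \<le> x'" "x' \<le> x" "y \<le> y'" "1 \<le> y" "x \<le> r" "y' \<le> r" "x < y \<or> y' < x'"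
  shows "coxeter_length r (\<lambda>i. if i = x' then x else if x' < i \<and> i \<le> x then i - 1
            else if i = y' then y else if y \<le> i \<and> i < y' then i + 1 else i) = (x - x') + (y' - y)"
proof -
  let ?p = "\<lambda>i. if i = x' then x else if x' < i \<and> i \<le> x then i - 1
            else if i = y' then y else if y \<le> i \<and> i < y' then i + 1 else (i::nat)"
  have eq: "{(i, j). 1 \<le> i \<and> i < j \<and> j \<le> r \<and> ?p j < ?p i} = ({x'} \<times> {x'<..x}) \<union> ({y..<y'} \<times> {y'})"
  proof (intro set_eqI iffI)
    fix z assume z: "z \<in> {(i, j). 1 \<le> i \<and> i < j \<and> j \<le> r \<and> ?p j < ?p i}"
    obtain i j where ij: "z = (i, j)" by fastforce
    have "i < j" "?p j < ?p i" using z ij by auto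
    from cox_sub[OF assms(1-4,7) this] show "z \<in> ({x'} \<times> {x'<..x}) \<union> ({y..<y'} \<times> {y'})"
      using ij by auto
  next
    fix z assume z: "z \<in> ({x'} \<times> {x'<..x}) \<union> ({y..<y'} \<times> {y'})"
    obtain i j where ij: "z = (i, j)" by fastforce
    show "z \<in> {(i, j). 1 \<le> i \<and> i < j \<and> j \<le> r \<and> ?p j < ?p i}"
    proof (cases "i = x' \<and> x' < j \<and> j \<le> x")
      case True
      then have "?p j = j - 1" "?p i = x" by auto
      then show ?thesis using True ij assms by auto
    next
      case False
      have "(i = x' \<and> x' < j \<and> j \<le> x) \<or> (y \<le> i \<and> i < y' \<and> j = y')" using z ij by auto
      then have c: "y \<le> i" "i < y'" "j = y'" using False by blast+
      have n1: "\<not> (x' \<le> i \<and> i \<le> x)" "\<not> (x' \<le> y' \<and> y' \<le> x)" using c assms by linarith+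
      have "j \<noteq> x'" "\<not> (x' < j \<and> j \<le> x)" using n1 c assms(2) by auto
      then have pj: "?p j = y" using c by auto
      have "i \<noteq> x'" "\<not> (x' < i \<and> i \<le> x)" "i \<noteq> y'" using n1 c assms(2) by auto
      then have "?p i = i + 1" using c by auto
      note pj this
      then show ?thesis using c ij assms by auto
    qed
  qed
  have d: "({x'} \<times> {x'<..x}) \<inter> ({y..<y'} \<times> {y'}) = {}" using assms by auto
  show ?thesis unfolding coxeter_length_def eq
    by (subst card_Un_disjoint) (use d in auto)
qed

lemma dec_unique:
  fixes f g :: "nat \<Rightarrow> int"
  assumes f: "\<And>i j. 1 \<le> i \<Longrightarrow> i < j \<Longrightarrow> j \<le> r \<Longrightarrow> f j < f i"
    and g: "\<And>i j. 1 \<le> i \<Longrightarrow> i < j \<Longrightarrow> j \<le> r \<Longrightarrow> g j < g i"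
    and im: "f ` {1..r} = g ` {1..r}"
    and i: "i \<in> {1..r}"
  shows "f i = g i"
proof -
  have sw: "sorted_wrt (<) (rev (map (\<lambda>k. h (Suc k)) [0..<r]))"
    if h: "\<And>i j. 1 \<le> i \<Longrightarrow> i < j \<Longrightarrow> j \<le> r \<Longrightarrow> h j < h i" for h :: "nat \<Rightarrow> int"
  proof -
    have "sorted_wrt (>) (map (\<lambda>k. h (Suc k)) [0..<r])"
      unfolding sorted_wrt_iff_nth_less using h by auto
    then show ?thesis by (simp add: sorted_wrt_rev)
  qed
  have img: "set (rev (map (\<lambda>k. h (Suc k)) [0..<r])) = h ` {1..r}" for h :: "nat \<Rightarrow> int"
  proof -
    have "Suc ` {0..<r} = {1..r}" by (simp add: image_Suc_atLeastLessThan atLeastLessThanSuc_atLeastAtMost)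
    then have "h ` {1..r} = (\<lambda>k. h (Suc k)) ` {0..<r}" by (metis image_image)
    then show ?thesis by simp
  qed
  have "rev (map (\<lambda>k. f (Suc k)) [0..<r]) = rev (map (\<lambda>k. g (Suc k)) [0..<r])"
    using sw[of f, OF f] sw[of g, OF g] im img[of f] img[of g]
    by (intro sorted_distinct_set_unique) (auto simp: strict_sorted_iff)
  then have "map (\<lambda>k. f (Suc k)) [0..<r] = map (\<lambda>k. g (Suc k)) [0..<r]" by simp
  then have "\<forall>k\<in>{0..<r}. f (Suc k) = g (Suc k)" by simp
  from this[rule_format, of "i - 1"] i show ?thesis by auto
qed

theorem mainTheorem4:
  fixes s :: int and nu kappa :: "nat list" and r :: nat
  assumes "is_partition nu" and "is_partition kappa" and "nu \<noteq> kappa"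
    and "psize nu = r" and "psize kappa = r"
  defines "rho \<equiv> diagram nu - (diagram nu \<inter> diagram kappa)"
    and "rho' \<equiv> diagram kappa - (diagram nu \<inter> diagram kappa)"
  shows "((is_ribbon rho \<and> is_ribbon rho') \<longleftrightarrow>
           int (card (Bset s r nu \<inter> Bset s r kappa)) = int r - 2)
     \<and> (int (card (Bset s r nu \<inter> Bset s r kappa)) = int r - 2 \<longrightarrow>
         (let h = card rho;
              x = fst (head rho); x' = fst (tail rho);
              y = fst (tail rho'); y' = fst (head rho');
              \<gamma> = (\<lambda>i. if i = x then beta s kappa x + int h
                       else if i = y then beta s kappa y - int h
                       else beta s kappa i)
          in card rho' = h
           \<and> beta s nu ` ({1..r} - {x', y'}) = beta s kappa ` ({1..r} - {x, y})
           \<and> content s (head rho) = beta s kappa x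
           \<and> beta s kappa x = beta s nu x' - int h
           \<and> content s (head rho') = beta s nu y'
           \<and> beta s nu y' = beta s kappa y - int h
           \<and> mset (map \<gamma> [1..<r+1]) = mset (map (beta s nu) [1..<r+1])
           \<and> (\<forall>\<pi>. \<pi> permutes {1..r} \<and>
                  (\<forall>i j. 1 \<le> i \<and> i < j \<and> j \<le> r \<longrightarrow> \<gamma> (\<pi> j) < \<gamma> (\<pi> i))
                  \<longrightarrow> int (coxeter_length r \<pi>) = ht rho + ht rho')
           \<and> ((y \<le> y' \<and> y' < x' \<and> x' \<le> x) \<noteq> (x' \<le> x \<and> x < y \<and> y \<le> y'))
           \<and> ((y \<le> y' \<and> y' < x' \<and> x' \<le> x) \<longleftrightarrow> strictly_dominated nu kappa)
           \<and> ((x' \<le> x \<and> x < y \<and> y \<le> y') \<longleftrightarrow> strictly_dominated kappa nu)))"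
proof -
  interpret T: tp nu kappa r s using assms(1,2,4,5) by unfold_locales
  interpret T': tp kappa nu r s using assms(1,2,4,5) by unfold_locales
  have ne: "nu \<noteq> kappa" by fact
  have rho_eq: "rho = diagram nu - diagram kappa" unfolding rho_def by auto
  have rho'_eq: "rho' = diagram kappa - diagram nu" unfolding rho'_def by auto
  have r2: "2 \<le> r" using T.r2[OF ne] .
  have cint: "int (card (Bset s r nu \<inter> Bset s r kappa)) = int r - 2 \<longleftrightarrow>
      card (Bset s r nu \<inter> Bset s r kappa) = r - 2" using r2 by linarith
  have comm: "Bset s r kappa \<inter> Bset s r nu = Bset s r nu \<inter> Bset s r kappa" by blast
  have part1: "(is_ribbon rho \<and> is_ribbon rho') \<longleftrightarrow> card (Bset s r nu \<inter> Bset s r kappa) = r - 2"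
  proof
    assume "is_ribbon rho \<and> is_ribbon rho'"
    then have a: "ribc nu kappa (Min (Rs nu kappa)) (Max (Rs nu kappa))"
      and b: "ribc kappa nu (Min (Rs kappa nu)) (Max (Rs kappa nu))"
      using T.ribbon_ribc T'.ribbon_ribc rho_eq rho'_eq by auto
    show "card (Bset s r nu \<inter> Bset s r kappa) = r - 2" using T.ribc_card[OF a b] .
  next
    assume c: "card (Bset s r nu \<inter> Bset s r kappa) = r - 2"
    have a: "ribc nu kappa (Min (Rs nu kappa)) (Max (Rs nu kappa))" using T.card_ribc[OF ne c] .
    have b: "ribc kappa nu (Min (Rs kappa nu)) (Max (Rs kappa nu))"
      using T'.card_ribc ne c comm by auto
    show "is_ribbon rho \<and> is_ribbon rho'"
      using T.ribc_ribbon[OF a] T'.ribc_ribbon[OF b] rho_eq rho'_eq by simp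
  qed
  show ?thesis
  proof (intro conjI impI)
    show "(is_ribbon rho \<and> is_ribbon rho') \<longleftrightarrow> int (card (Bset s r nu \<inter> Bset s r kappa)) = int r - 2"
      using part1 cint by simp
    assume "int (card (Bset s r nu \<inter> Bset s r kappa)) = int r - 2"
    then have c: "card (Bset s r nu \<inter> Bset s r kappa) = r - 2" using cint by simp
    obtain x' where x'd: "x' = Min (Rs nu kappa)" by simp
    obtain x where xd: "x = Max (Rs nu kappa)" by simp
    obtain y where yd: "y = Min (Rs kappa nu)" by simp
    obtain y' where y'd: "y' = Max (Rs kappa nu)" by simp
    have rc1: "ribc nu kappa x' x" using T.card_ribc[OF ne c] x'd xd by simp
    have rc2: "ribc kappa nu y y'" using T'.card_ribc ne c comm yd y'd by auto
    have R1: "Rs nu kappa = {x'..x}" and x'1: "1 \<le> x'" and x'x: "x' \<le> x"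
      and adj1: "\<And>i. x' \<le> i \<Longrightarrow> i < x \<Longrightarrow> part nu (Suc i) = part kappa i + 1"
      using rc1 by (auto simp: ribc_def)
    have R2: "Rs kappa nu = {y..y'}" and y1: "1 \<le> y" and yy': "y \<le> y'"
      and adj2: "\<And>i. y \<le> i \<Longrightarrow> i < y' \<Longrightarrow> part kappa (Suc i) = part nu i + 1"
      using rc2 by (auto simp: ribc_def)
    have in1: "i \<in> Rs nu kappa \<longleftrightarrow> x' \<le> i \<and> i \<le> x" for i unfolding R1 by simp
    have in2: "i \<in> Rs kappa nu \<longleftrightarrow> y \<le> i \<and> i \<le> y'" for i unfolding R2 by simp
    have xr: "x \<le> r" using T.Rs_sub in1[of x] x'x by auto
    have y'r: "y' \<le> r" using T'.Rs_sub in2[of y'] yy' by auto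
    have disj: "\<not> (x' \<le> i \<and> i \<le> x \<and> y \<le> i \<and> i \<le> y')" for i
      using in1[of i] in2[of i] T.Rs_disj by blast
    have ord: "x < y \<or> y' < x'"
    proof (rule ccontr)
      assume "\<not> (x < y \<or> y' < x')"
      then show False using disj[of "max x' y"] x'x yy' by linarith
    qed
    have hd1: "head rho = (x, part kappa x + 1)" using T.head_S[OF rc1] rho_eq by simp
    have tl1: "tail rho = (x', part nu x')" using T.tail_S[OF rc1] rho_eq by simp
    have hd2: "head rho' = (y', part nu y' + 1)" using T'.head_S[OF rc2] rho'_eq by simp
    have tl2: "tail rho' = (y, part kappa y)" using T'.tail_S[OF rc2] rho'_eq by simp
    have h1: "int (card rho) = beta s nu x' - beta s kappa x" using T.card_S_int[OF rc1] rho_eq by simp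
    have cc: "card rho' = card rho" using T.card_sym rho_eq rho'_eq by simp
    have h2: "int (card rho) = beta s kappa y - beta s nu y'"
      using T'.card_S_int[OF rc2] rho'_eq cc by simp
    have img1: "beta s nu ` ({1..r} - {x', y'}) = Bset s r nu \<inter> Bset s r kappa"
      using T.ribc_image[OF rc1 rc2] .
    have img2: "beta s kappa ` ({1..r} - {x, y}) = Bset s r nu \<inter> Bset s r kappa"
      using T'.ribc_image[OF rc2 rc1] comm by (simp add: insert_commute)
    define h where "h = card rho"
    define \<gamma> where "\<gamma> = (\<lambda>i. if i = x then beta s kappa x + int h
                       else if i = y then beta s kappa y - int h
                       else beta s kappa i)"
    have xy: "x \<noteq> y" using disj[of x] x'x yy' ord by auto
    have gx: "\<gamma> x = beta s nu x'" using h1 unfolding \<gamma>_def h_def by simp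
    have gy: "\<gamma> y = beta s nu y'" using h2 xy unfolding \<gamma>_def h_def by simp
    have gother: "\<gamma> i = beta s kappa i" if "i \<noteq> x" "i \<noteq> y" for i using that unfolding \<gamma>_def by simp
    have xin: "x \<in> {1..r}" "y \<in> {1..r}" "x' \<in> {1..r}" "y' \<in> {1..r}"
      using x'1 x'x xr y1 yy' y'r by auto
    have gimg: "\<gamma> ` {1..r} = Bset s r nu"
    proof -
      have "{1..r} = ({1..r} - {x, y}) \<union> {x, y}" using xin by auto
      then have "\<gamma> ` {1..r} = \<gamma> ` ({1..r} - {x, y}) \<union> {\<gamma> x, \<gamma> y}" by (metis image_Un image_empty image_insert)
      also have "\<gamma> ` ({1..r} - {x, y}) = beta s kappa ` ({1..r} - {x, y})"
        using gother by (intro image_cong) auto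
      also have "{1..r} = ({1..r} - {x', y'}) \<union> {x', y'}" using xin by auto
      then have "Bset s r nu = beta s nu ` ({1..r} - {x', y'}) \<union> {beta s nu x', beta s nu y'}"
        unfolding Bset_def by (metis image_Un image_empty image_insert)
      ultimately show ?thesis using img1 img2 gx gy by simp
    qed
    have cardB: "card (Bset s r nu) = r" using card_Bset[OF assms(1)] .
    have ginj: "inj_on \<gamma> {1..r}" using gimg cardB by (simp add: inj_on_iff_eq_card)
    have setl: "set [1..<r+1] = {1..r}" by auto
    have mset_eq: "mset (map \<gamma> [1..<r+1]) = mset (map (beta s nu) [1..<r+1])"
    proof -
      have d1: "distinct (map \<gamma> [1..<r+1])" using ginj setl by (simp add: distinct_map)
      have d2: "distinct (map (beta s nu) [1..<r+1])"
        using beta_inj_on[OF assms(1), of s r] setl by (simp add: distinct_map)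
      have "set (map \<gamma> [1..<r+1]) = set (map (beta s nu) [1..<r+1])"
        using gimg setl by (simp add: Bset_def)
      then show ?thesis using d1 d2 set_eq_iff_mset_eq_distinct by blast
    qed
    define p0 where "p0 = (\<lambda>i. if i = x' then x else if x' < i \<and> i \<le> x then i - 1
            else if i = y' then y else if y \<le> i \<and> i < y' then i + 1 else (i::nat))"
    have p0r: "p0 i \<in> {1..r}" if "i \<in> {1..r}" for i
      using that x'1 x'x xr y1 yy' y'r unfolding p0_def by auto
    have gp0: "\<gamma> (p0 i) = beta s nu i" if i: "i \<in> {1..r}" for i
    proof -
      consider (a) "i = x'" | (b) "x' < i \<and> i \<le> x" | (c) "i = y'" | (d) "y \<le> i \<and> i < y'"
        | (e) "\<not> (x' \<le> i \<and> i \<le> x)" "\<not> (y \<le> i \<and> i \<le> y')" by linarith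
      then show ?thesis
      proof cases
        case a then show ?thesis using gx by (simp add: p0_def)
      next
        case b
        then have p: "p0 i = i - 1" by (simp add: p0_def)
        have ne1: "i - 1 \<noteq> x" "i - 1 \<noteq> y" using b disj[of "i - 1"] yy' by auto
        have b2: "x' \<le> i - 1" "i - 1 < x" "Suc (i - 1) = i" using b by auto
        have "part nu i = part kappa (i - 1) + 1" using adj1[OF b2(1,2)] b2(3) by simp
        then have "beta s nu i = beta s kappa (i - 1)" using b x'1 by (simp add: beta_def)
        then show ?thesis using p gother[OF ne1] by simp
      next
        case c
        have "\<not> (x' \<le> y' \<and> y' \<le> x)" using disj[of y'] yy' by auto
        then have p: "p0 i = y" using c x'x by (auto simp: p0_def)
        then show ?thesis using gy c by simp
      next
        case d
        have "\<not> (x' \<le> i \<and> i \<le> x)" using disj[of i] d by auto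
        then have p: "p0 i = i + 1" using d x'x by (auto simp: p0_def)
        have ne1: "i + 1 \<noteq> x" "i + 1 \<noteq> y" using d disj[of "i + 1"] x'x by auto
        have "part kappa (Suc i) = part nu i + 1" using adj2[of i] d by simp
        then have "beta s nu i = beta s kappa (i + 1)" by (simp add: beta_def)
        then show ?thesis using p gother[OF ne1] by simp
      next
        case e
        then have p: "p0 i = i" using x'x yy' by (auto simp: p0_def)
        have ne1: "i \<noteq> x" "i \<noteq> y" using e x'x yy' by auto
        have "i \<notin> Rs nu kappa" "i \<notin> Rs kappa nu" using e in1 in2 by auto
        then have "part nu i = part kappa i" using i by (auto simp: Rs_def)
        then show ?thesis using p gother[OF ne1] by (simp add: beta_def)
      qed
    qed
    have cox0: "coxeter_length r p0 = (x - x') + (y' - y)"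
      unfolding p0_def by (rule cox_count) (use x'1 x'x yy' y1 xr y'r ord in auto)
    have coxp: "int (coxeter_length r \<pi>) = ht rho + ht rho'"
      if pi: "\<pi> permutes {1..r} \<and> (\<forall>i j. 1 \<le> i \<and> i < j \<and> j \<le> r \<longrightarrow> \<gamma> (\<pi> j) < \<gamma> (\<pi> i))" for \<pi>
    proof -
      have perm: "\<pi> permutes {1..r}" using pi by blast
      have eqb: "\<gamma> (\<pi> i) = beta s nu i" if "i \<in> {1..r}" for i
      proof (rule dec_unique[where r = r and f = "\<lambda>i. \<gamma> (\<pi> i)" and g = "beta s nu"])
        show "\<And>i j. 1 \<le> i \<Longrightarrow> i < j \<Longrightarrow> j \<le> r \<Longrightarrow> \<gamma> (\<pi> j) < \<gamma> (\<pi> i)" using pi by blast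
        show "\<And>i j. 1 \<le> i \<Longrightarrow> i < j \<Longrightarrow> j \<le> r \<Longrightarrow> beta s nu j < beta s nu i"
          using beta_strict[OF assms(1)] by blast
        have "(\<lambda>i. \<gamma> (\<pi> i)) ` {1..r} = \<gamma> ` (\<pi> ` {1..r})" by (simp add: image_image)
        also have "\<dots> = \<gamma> ` {1..r}" using permutes_image[OF perm] by simp
        finally show "(\<lambda>i. \<gamma> (\<pi> i)) ` {1..r} = beta s nu ` {1..r}" using gimg by (simp add: Bset_def)
        show "i \<in> {1..r}" by fact
      qed
      have pp0: "\<pi> i = p0 i" if "i \<in> {1..r}" for i
      proof -
        have "\<pi> i \<in> {1..r}" using permutes_in_image[OF perm] that by simp
        moreover have "\<gamma> (\<pi> i) = \<gamma> (p0 i)" using eqb[OF that] gp0[OF that] by simp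
        ultimately show ?thesis using ginj p0r[OF that] by (meson inj_onD)
      qed
      have "{(i, j). 1 \<le> i \<and> i < j \<and> j \<le> r \<and> \<pi> j < \<pi> i} = {(i, j). 1 \<le> i \<and> i < j \<and> j \<le> r \<and> p0 j < p0 i}"
      proof (intro set_eqI iffI)
        fix z assume "z \<in> {(i, j). 1 \<le> i \<and> i < j \<and> j \<le> r \<and> \<pi> j < \<pi> i}"
        then obtain i j where z: "z = (i, j)" "1 \<le> i" "i < j" "j \<le> r" "\<pi> j < \<pi> i" by blast
        then have "\<pi> i = p0 i" "\<pi> j = p0 j" using pp0 by auto
        then show "z \<in> {(i, j). 1 \<le> i \<and> i < j \<and> j \<le> r \<and> p0 j < p0 i}" using z by auto
      next
        fix z assume "z \<in> {(i, j). 1 \<le> i \<and> i < j \<and> j \<le> r \<and> p0 j < p0 i}"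
        then obtain i j where z: "z = (i, j)" "1 \<le> i" "i < j" "j \<le> r" "p0 j < p0 i" by blast
        then have "\<pi> i = p0 i" "\<pi> j = p0 j" using pp0 by auto
        then show "z \<in> {(i, j). 1 \<le> i \<and> i < j \<and> j \<le> r \<and> \<pi> j < \<pi> i}" using z by auto
      qed
      then have "coxeter_length r \<pi> = coxeter_length r p0" by (simp add: coxeter_length_def)
      then show ?thesis using cox0 hd1 tl1 hd2 tl2 x'x yy' by (simp add: ht_def of_nat_diff)
    qed
    have dom1: "strictly_dominated nu kappa \<longleftrightarrow> y' < x'"
    proof
      assume sd: "strictly_dominated nu kappa"
      show "y' < x'"
      proof (rule ccontr)
        assume "\<not> y' < x'"
        then have xy2: "x < y" using ord by simp
        have "dominated kappa nu"
        proof (rule T.dom_lemma[where c = y])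
          fix i assume "1 \<le> i" "part kappa i < part nu i"
          then have "i \<in> Rs nu kappa" by (simp add: Rs_def)
          then show "i < y" using in1 xy2 by auto
        next
          fix i assume "1 \<le> i" "part nu i < part kappa i"
          then have "i \<in> Rs kappa nu" by (simp add: Rs_def)
          then show "y \<le> i" using in2 by auto
        qed
        then have "nu = kappa" using T.dom_antisym sd by (simp add: strictly_dominated_def)
        then show False using ne by simp
      qed
    next
      assume yx: "y' < x'"
      have "dominated nu kappa"
      proof (rule T'.dom_lemma[where c = x'])
        fix i assume "1 \<le> i" "part nu i < part kappa i"
        then have "i \<in> Rs kappa nu" by (simp add: Rs_def)
        then show "i < x'" using in2 yx by auto
      next
        fix i assume "1 \<le> i" "part kappa i < part nu i"
        then have "i \<in> Rs nu kappa" by (simp add: Rs_def)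
        then show "x' \<le> i" using in1 by auto
      qed
      then show "strictly_dominated nu kappa" using ne by (simp add: strictly_dominated_def)
    qed
    have dom2: "strictly_dominated kappa nu \<longleftrightarrow> x < y"
    proof
      assume sd: "strictly_dominated kappa nu"
      show "x < y"
      proof (rule ccontr)
        assume "\<not> x < y"
        then have yx: "y' < x'" using ord by simp
        have "dominated nu kappa"
        proof (rule T'.dom_lemma[where c = x'])
          fix i assume "1 \<le> i" "part nu i < part kappa i"
          then have "i \<in> Rs kappa nu" by (simp add: Rs_def)
          then show "i < x'" using in2 yx by auto
        next
          fix i assume "1 \<le> i" "part kappa i < part nu i"
          then have "i \<in> Rs nu kappa" by (simp add: Rs_def)
          then show "x' \<le> i" using in1 by auto
        qed
        then have "nu = kappa" using T.dom_antisym sd by (simp add: strictly_dominated_def)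
        then show False using ne by simp
      qed
    next
      assume xy2: "x < y"
      have "dominated kappa nu"
      proof (rule T.dom_lemma[where c = y])
        fix i assume "1 \<le> i" "part kappa i < part nu i"
        then have "i \<in> Rs nu kappa" by (simp add: Rs_def)
        then show "i < y" using in1 xy2 by auto
      next
        fix i assume "1 \<le> i" "part nu i < part kappa i"
        then have "i \<in> Rs kappa nu" by (simp add: Rs_def)
        then show "y \<le> i" using in2 by auto
      qed
      then show "strictly_dominated kappa nu" using ne by (simp add: strictly_dominated_def)
    qed
    have xorF: "(y \<le> y' \<and> y' < x' \<and> x' \<le> x) \<noteq> (x' \<le> x \<and> x < y \<and> y \<le> y')"
      using ord x'x yy' by auto
    have d1F: "(y \<le> y' \<and> y' < x' \<and> x' \<le> x) \<longleftrightarrow> strictly_dominated nu kappa" using dom1 x'x yy' by simp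
    have d2F: "(x' \<le> x \<and> x < y \<and> y \<le> y') \<longleftrightarrow> strictly_dominated kappa nu" using dom2 x'x yy' by simp
    have fx: "fst (head rho) = x" "fst (tail rho) = x'" "fst (tail rho') = y" "fst (head rho') = y'"
      using hd1 tl1 hd2 tl2 by simp_all
    have main: "card rho' = h
           \<and> beta s nu ` ({1..r} - {x', y'}) = beta s kappa ` ({1..r} - {x, y})
           \<and> content s (head rho) = beta s kappa x
           \<and> beta s kappa x = beta s nu x' - int h
           \<and> content s (head rho') = beta s nu y'
           \<and> beta s nu y' = beta s kappa y - int h
           \<and> mset (map \<gamma> [1..<r+1]) = mset (map (beta s nu) [1..<r+1])
           \<and> (\<forall>\<pi>. \<pi> permutes {1..r} \<and>
                  (\<forall>i j. 1 \<le> i \<and> i < j \<and> j \<le> r \<longrightarrow> \<gamma> (\<pi> j) < \<gamma> (\<pi> i))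
                  \<longrightarrow> int (coxeter_length r \<pi>) = ht rho + ht rho')
           \<and> ((y \<le> y' \<and> y' < x' \<and> x' \<le> x) \<noteq> (x' \<le> x \<and> x < y \<and> y \<le> y'))
           \<and> ((y \<le> y' \<and> y' < x' \<and> x' \<le> x) \<longleftrightarrow> strictly_dominated nu kappa)
           \<and> ((x' \<le> x \<and> x < y \<and> y \<le> y') \<longleftrightarrow> strictly_dominated kappa nu)"
    proof (intro conjI allI impI)
      show "card rho' = h" using cc h_def by simp
      show "beta s nu ` ({1..r} - {x', y'}) = beta s kappa ` ({1..r} - {x, y})" using img1 img2 by simp
      show "content s (head rho) = beta s kappa x" using hd1 by (simp add: content_def beta_def)
      show "beta s kappa x = beta s nu x' - int h" using h1 h_def by simp
      show "content s (head rho') = beta s nu y'" using hd2 by (simp add: content_def beta_def)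
      show "beta s nu y' = beta s kappa y - int h" using h2 h_def by simp
      show "mset (map \<gamma> [1..<r+1]) = mset (map (beta s nu) [1..<r+1])" by (rule mset_eq)
      fix \<pi> assume "\<pi> permutes {1..r} \<and> (\<forall>i j. 1 \<le> i \<and> i < j \<and> j \<le> r \<longrightarrow> \<gamma> (\<pi> j) < \<gamma> (\<pi> i))"
      then show "int (coxeter_length r \<pi>) = ht rho + ht rho'" by (rule coxp)
    qed (use xorF d1F d2F in simp_all)
    show "let h = card rho;
              x = fst (head rho); x' = fst (tail rho);
              y = fst (tail rho'); y' = fst (head rho');
              \<gamma> = (\<lambda>i. if i = x then beta s kappa x + int h
                       else if i = y then beta s kappa y - int h
                       else beta s kappa i)
          in card rho' = h
           \<and> beta s nu ` ({1..r} - {x', y'}) = beta s kappa ` ({1..r} - {x, y})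
           \<and> content s (head rho) = beta s kappa x
           \<and> beta s kappa x = beta s nu x' - int h
           \<and> content s (head rho') = beta s nu y'
           \<and> beta s nu y' = beta s kappa y - int h
           \<and> mset (map \<gamma> [1..<r+1]) = mset (map (beta s nu) [1..<r+1])
           \<and> (\<forall>\<pi>. \<pi> permutes {1..r} \<and>
                  (\<forall>i j. 1 \<le> i \<and> i < j \<and> j \<le> r \<longrightarrow> \<gamma> (\<pi> j) < \<gamma> (\<pi> i))
                  \<longrightarrow> int (coxeter_length r \<pi>) = ht rho + ht rho')
           \<and> ((y \<le> y' \<and> y' < x' \<and> x' \<le> x) \<noteq> (x' \<le> x \<and> x < y \<and> y \<le> y'))
           \<and> ((y \<le> y' \<and> y' < x' \<and> x' \<le> x) \<longleftrightarrow> strictly_dominated nu kappa)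
           \<and> ((x' \<le> x \<and> x < y \<and> y \<le> y') \<longleftrightarrow> strictly_dominated kappa nu)"
      unfolding Let_def fx using main[unfolded \<gamma>_def h_def] by blast
  qed
qed

end
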